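(* For every fixed $d$ there is a constant $C_d$ such that for any set $P$ of $n$ points in $\mathbb{R}^d$ there is a (constructible) collection $\mathcal{B}(P)$ of at most $n/8$ axis-parallel boxes such that every axis-parallel box $R\subseteq\mathbb{R}^d$ can be written as a disjoint union of some boxes from $\mathcal{B}(P)$ together with a region $R'\subseteq R$ containing at most $C_d\log^{2d-2}n$ points of $P$.
   Context: An axis-parallel box in $\mathbb{R}^d$ is a product of $d$ intervals. *)

theory Defs
  imports "HOL-Analysis.Analysis"
begin

definition axis_box :: "(real ^ 'n) set \<Rightarrow> bool" where
  "axis_box S \<longleftrightarrow> (\<exists>I :: 'n \<Rightarrow> real set. (\<forall>i. is_interval (I i)) \<and> S = {x. \<forall>i. x $ i \<in> I i})"

end

theory Submission
  imports Defs
begin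

definition rk :: "(real^'n) set \<Rightarrow> 'n \<Rightarrow> real^'n \<Rightarrow> nat" where
  "rk P i x = card {y\<in>P. y$i < x$i}"

lemma rk_less:
  assumes "finite P" "x \<in> P" "x$i < y$i"
  shows "rk P i x < rk P i y"
proof -
  have "{z\<in>P. z$i < x$i} \<subseteq> {z\<in>P. z$i < y$i}" using less_trans[OF _ assms(3)] by blast
  moreover have "x \<in> {z\<in>P. z$i < y$i}" "x \<notin> {z\<in>P. z$i < x$i}" using assms by auto
  ultimately have "{z\<in>P. z$i < x$i} \<subset> {z\<in>P. z$i < y$i}" by blast
  then show ?thesis unfolding rk_def using assms(1) by (intro psubset_card_mono) auto
qed

lemma rk_le:
  assumes "finite P" "x$i \<le> y$i"
  shows "rk P i x \<le> rk P i y"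
  unfolding rk_def using assms by (intro card_mono) auto

lemma rk_less_iff:
  assumes "finite P" "x \<in> P" "y \<in> P"
  shows "rk P i x < rk P i y \<longleftrightarrow> x$i < y$i"
  using rk_less[OF assms(1,2)] rk_le[OF assms(1), of y i x] by force

lemma rk_eq_iff:
  assumes "finite P" "x \<in> P" "y \<in> P"
  shows "rk P i x = rk P i y \<longleftrightarrow> x$i = y$i"
proof -
  have a: "rk P i x < rk P i y \<longleftrightarrow> x$i < y$i" and b: "rk P i y < rk P i x \<longleftrightarrow> y$i < x$i"
    using rk_less_iff[OF assms] rk_less_iff[OF assms(1,3,2)] by auto
  have c: "rk P i x = rk P i y \<longleftrightarrow> \<not> rk P i x < rk P i y \<and> \<not> rk P i y < rk P i x" by auto
  have d: "x$i = y$i \<longleftrightarrow> \<not> x$i < y$i \<and> \<not> y$i < x$i" by auto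
  show ?thesis using a b c d by simp
qed

lemma rk_bound:
  assumes "finite P" "x \<in> P"
  shows "rk P i x < card P"
  unfolding rk_def using assms by (intro psubset_card_mono) auto

lemma rk_below:
  assumes "finite P" "y \<in> P"
  shows "{z\<in>P. rk P i z < rk P i y} = {z\<in>P. z$i < y$i}"
    "card {z\<in>P. rk P i z < rk P i y} = rk P i y"
proof -
  show 1: "{z\<in>P. rk P i z < rk P i y} = {z\<in>P. z$i < y$i}"
    using rk_less_iff[OF assms(1) _ assms(2)] by auto
  show "card {z\<in>P. rk P i z < rk P i y} = rk P i y"
    by (subst 1) (simp add: rk_def)
qed

lemma blk_iff: "0 < (d::nat) \<Longrightarrow> k div d = a \<longleftrightarrow> a*d \<le> k \<and> k < (a+1)*d"
proof
  assume "0 < d" "k div d = a"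
  then have "k = a*d + k mod d" using div_mult_mod_eq[of k d] by (simp add: mult.commute)
  moreover have "k mod d < d" using \<open>0 < d\<close> by simp
  ultimately show "a*d \<le> k \<and> k < (a+1)*d" by (simp add: algebra_simps)
next
  assume "0 < d" "a*d \<le> k \<and> k < (a+1)*d"
  then show "k div d = a" by (intro div_nat_eqI) (auto simp: mult.commute)
qed

lemma three_le2:
  fixes A :: "nat set"
  assumes "finite A" "\<And>a b c. a\<in>A \<Longrightarrow> b\<in>A \<Longrightarrow> c\<in>A \<Longrightarrow> a<b \<Longrightarrow> b<c \<Longrightarrow> False"
  shows "card A \<le> 2"
proof (cases "A = {}")
  case True then show ?thesis by simp
next
  case False
  have "A \<subseteq> {Min A, Max A}"
  proof
    fix x assume x: "x \<in> A"
    have "Min A \<le> x" "x \<le> Max A" using x assms(1) by auto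
    moreover have "Min A \<in> A" "Max A \<in> A" using False assms(1) by auto
    ultimately show "x \<in> {Min A, Max A}"
    proof (cases "x = Min A \<or> x = Max A")
      case False
      then have "Min A < x" "x < Max A" using \<open>Min A \<le> x\<close> \<open>x \<le> Max A\<close> by auto
      then show ?thesis using assms(2)[of "Min A" x "Max A"] x \<open>Min A \<in> A\<close> \<open>Max A \<in> A\<close> by blast
    qed auto
  qed
  then have "card A \<le> card {Min A, Max A}" by (intro card_mono) auto
  also have "\<dots> \<le> 2" by (simp add: card_insert_if)
  finally show ?thesis .
qed

lemma div_pow_shift:
  fixes x :: nat assumes "l \<le> l'"
  shows "x div 2^l div 2^(l'-l) = x div 2^l'"
proof -
  have "(2::nat)^l' = 2^l * 2^(l'-l)" using assms by (simp flip: power_add)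
  then show ?thesis by (simp add: div_mult2_eq)
qed

lemma dyadic:
  fixes s e L :: nat assumes eL: "e \<le> 2^L"
  shows "\<exists>T. T \<subseteq> {..L} \<times> {..<e} \<and> card T \<le> 2*(L+1) \<and>
     (\<forall>t\<in>T. \<forall>k. k div 2^fst t = snd t \<longrightarrow> s \<le> k \<and> k < e) \<and>
     (\<forall>k. s \<le> k \<and> k < e \<longrightarrow> (\<exists>t\<in>T. k div 2^fst t = snd t)) \<and>
     (\<forall>t\<in>T. \<forall>t'\<in>T. t \<noteq> t' \<longrightarrow>
        (\<forall>k k'. k div 2^fst t = snd t \<longrightarrow> k' div 2^fst t' = snd t' \<longrightarrow> k < k') \<or>
        (\<forall>k k'. k div 2^fst t = snd t \<longrightarrow> k' div 2^fst t' = snd t' \<longrightarrow> k' < k))"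
proof -
  define inU where "inU l a \<longleftrightarrow> (\<forall>k::nat. k div 2^l = a \<longrightarrow> s \<le> k \<and> k < e)" for l a :: nat
  have F1: "inU l a \<longleftrightarrow> s \<le> a*2^l \<and> (a+1)*2^l \<le> e" for l a
  proof
    assume h: "inU l a"
    have "a*2^l div 2^l = a" by simp
    then have 1: "s \<le> a*2^l" using h unfolding inU_def by blast
    have p1: "(1::nat) \<le> 2^l" by simp
    have "a*2^l + 1 \<le> (a+1)*2^l" using p1 by (simp add: algebra_simps)
    then have "a*2^l \<le> (a+1)*2^l - 1" "(a+1)*2^l - 1 < (a+1)*2^l" by arith+
    then have "((a+1)*2^l - 1) div 2^l = a"
      using blk_iff[of "2^l" "(a+1)*2^l - 1" a] by simp
    then have "(a+1)*2^l - 1 < e" using h unfolding inU_def by blast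
    then show "s \<le> a*2^l \<and> (a+1)*2^l \<le> e" using 1 by simp
  next
    assume h: "s \<le> a*2^l \<and> (a+1)*2^l \<le> e"
    show "inU l a" unfolding inU_def
    proof (intro allI impI)
      fix k :: nat assume "k div 2^l = a"
      then have "a*2^l \<le> k \<and> k < (a+1)*2^l" using blk_iff[of "2^l" k a] by simp
      then show "s \<le> k \<and> k < e" using h by linarith
    qed
  qed
  define T where "T = {(l,a). l \<le> L \<and> a < e \<and> inU l a \<and> \<not> inU (Suc l) (a div 2)}"
  have Tsub: "T \<subseteq> {..L} \<times> {..<e}" unfolding T_def by auto
  have pw: "(2::nat)^Suc l = 2^l * 2" for l by simp
  have cover: "\<exists>t\<in>T. k div 2^fst t = snd t" if k: "s \<le> k" "k < e" for k
  proof -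
    define M where "M = {l. l \<le> L \<and> inU l (k div 2^l)}"
    have "0 \<in> M" unfolding M_def inU_def using k by auto
    have fM: "finite M" unfolding M_def by auto
    define l where "l = Max M"
    have lM: "l \<in> M" unfolding l_def using fM \<open>0 \<in> M\<close> by (intro Max_in) auto
    have notS: "\<not> inU (Suc l) (k div 2^l div 2)"
    proof
      assume h: "inU (Suc l) (k div 2^l div 2)"
      have eq: "k div 2^l div 2 = k div 2^Suc l" by (simp only: pw div_mult2_eq)
      show False
      proof (cases "Suc l \<le> L")
        case True
        then have "Suc l \<in> M" unfolding M_def using h eq by auto
        then have "Suc l \<le> l" unfolding l_def using fM by auto
        then show False by simp
      next
        case False
        then have "l = L" using lM unfolding M_def by auto
        have "(k div 2^l div 2 + 1) * 2^Suc l \<le> e" using h F1 by blast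
        moreover have "2^Suc l \<le> (k div 2^l div 2 + 1) * 2^Suc l" by simp
        moreover have "(2::nat)^L < 2^Suc l" using \<open>l = L\<close> by simp
        ultimately show False using eL by linarith
      qed
    qed
    have "k div 2^l \<le> k" by (simp add: div_le_dividend)
    then have "k div 2^l < e" using k by linarith
    then have "(l, k div 2^l) \<in> T" unfolding T_def using lM notS k unfolding M_def by auto
    then show ?thesis by force
  qed
  have nest: "(l,a) = (l',a')" if T1: "(l,a) \<in> T" and T2: "(l',a') \<in> T" and ll: "l \<le> l'"
     and k1: "k div 2^l = a" and k2: "k div 2^l' = a'" for l a l' a' k
  proof (cases "l = l'")
    case True then show ?thesis using k1 k2 by simp
  next
    case False
    then have lt: "Suc l \<le> l'" using ll by simp
    have "inU (Suc l) (a div 2)" unfolding inU_def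
    proof (intro allI impI)
      fix j :: nat assume j: "j div 2^Suc l = a div 2"
      have "a div 2 = k div 2^Suc l" by (simp only: pw div_mult2_eq k1)
      then have "j div 2^l' = k div 2^l'"
        using div_pow_shift[OF lt, of j] div_pow_shift[OF lt, of k] j by simp
      then have "j div 2^l' = a'" using k2 by simp
      then show "s \<le> j \<and> j < e" using T2 unfolding T_def inU_def by auto
    qed
    then show ?thesis using T1 unfolding T_def by auto
  qed
  have disj: "\<not> (k div 2^l = a \<and> k div 2^l' = a')"
    if "(l,a) \<in> T" "(l',a') \<in> T" "(l,a) \<noteq> (l',a')" for l a l' a' k
  proof
    assume k: "k div 2^l = a \<and> k div 2^l' = a'"
    show False
    proof (cases "l \<le> l'")
      case True then show False using nest[OF that(1,2) True conjunct1[OF k] conjunct2[OF k]] that(3) by simp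
    next
      case False then have "l' \<le> l" by simp
      then show False using nest[OF that(2,1) _ conjunct2[OF k] conjunct1[OF k]] that(3) by simp
    qed
  qed
  have order: "(\<forall>k k'. k div 2^l = a \<longrightarrow> k' div 2^l' = a' \<longrightarrow> k < k') \<or>
        (\<forall>k k'. k div 2^l = a \<longrightarrow> k' div 2^l' = a' \<longrightarrow> k' < k)"
    if "(l,a) \<in> T" "(l',a') \<in> T" "(l,a) \<noteq> (l',a')" for l a l' a'
  proof -
    have m1: "k div 2^l = a \<longleftrightarrow> a*2^l \<le> k \<and> k < (a+1)*2^l" for k using blk_iff[of "2^l"] by simp
    have m2: "k div 2^l' = a' \<longleftrightarrow> a'*2^l' \<le> k \<and> k < (a'+1)*2^l'" for k using blk_iff[of "2^l'"] by simp
    have ne1: "a*2^l < (a+1)*2^l" and ne2: "a'*2^l' < (a'+1)*2^l'" by simp_all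
    have d: "\<not> (a*2^l \<le> k \<and> k < (a+1)*2^l \<and> a'*2^l' \<le> k \<and> k < (a'+1)*2^l')" for k
      using disj[OF that, of k] m1 m2 by blast
    have "(a+1)*2^l \<le> a'*2^l' \<or> (a'+1)*2^l' \<le> a*2^l"
    proof (rule ccontr)
      assume c: "\<not> ?thesis"
      show False
      proof (cases "a*2^l \<le> a'*2^l'")
        case True then show False using d[of "a'*2^l'"] c ne2 by linarith
      next
        case False then show False using d[of "a*2^l"] c ne1 by linarith
      qed
    qed
    then show ?thesis
    proof
      assume h: "(a+1)*2^l \<le> a'*2^l'"
      show ?thesis
      proof (rule disjI1, intro allI impI)
        fix k k' assume "k div 2^l = a" "k' div 2^l' = a'"
        then have "k < (a+1)*2^l" "a'*2^l' \<le> k'" using m1 m2 by auto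
        then show "k < k'" using h by linarith
      qed
    next
      assume h: "(a'+1)*2^l' \<le> a*2^l"
      show ?thesis
      proof (rule disjI2, intro allI impI)
        fix k k' assume "k div 2^l = a" "k' div 2^l' = a'"
        then have "a*2^l \<le> k" "k' < (a'+1)*2^l'" using m1 m2 by auto
        then show "k' < k" using h by linarith
      qed
    qed
  qed
  have lev: "card {a. (l,a) \<in> T} \<le> 2" for l
  proof (rule three_le2)
    have "{a. (l,a) \<in> T} \<subseteq> {..<e}" using Tsub by auto
    then show "finite {a. (l,a) \<in> T}" by (rule finite_subset) simp
  next
    fix a1 a2 a3 assume A: "a1 \<in> {a. (l,a) \<in> T}" "a2 \<in> {a. (l,a) \<in> T}" "a3 \<in> {a. (l,a) \<in> T}"
      "a1 < a2" "a2 < a3"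
    have i1: "s \<le> a1*2^l" and i3: "(a3+1)*2^l \<le> e" using A(1,3) unfolding T_def F1 by auto
    have "inU (Suc l) (a2 div 2)" unfolding F1
    proof -
      have "s \<le> a1 * 2^l" by (rule i1)
      also have "a1*2^l \<le> (a2 div 2) * 2^Suc l"
      proof -
        have "a1 \<le> (a2 div 2)*2" using A(4) by presburger
        then have "a1*2^l \<le> ((a2 div 2)*2)*2^l" by (rule mult_right_mono) simp
        also have "((a2 div 2)*2)*2^l = (a2 div 2) * 2^Suc l" by (simp add: pw algebra_simps)
        finally show ?thesis .
      qed
      finally have 1: "s \<le> (a2 div 2) * 2^Suc l" .
      have "(a2 div 2 + 1) * 2^Suc l = ((a2 div 2)*2 + 2) * 2^l" by (simp add: pw algebra_simps)
      also have "\<dots> \<le> (a3+1)*2^l" using A(5) by (intro mult_right_mono) linarith+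
      finally show "s \<le> a2 div 2 * 2 ^ Suc l \<and> (a2 div 2 + 1) * 2 ^ Suc l \<le> e" using 1 i3 by simp
    qed
    then show False using A(2) unfolding T_def by auto
  qed
  have fT: "finite T" using Tsub by (rule finite_subset) auto
  have "T = (\<Union>l\<in>{..L}. (\<lambda>a. (l,a)) ` {a. (l,a) \<in> T})" using Tsub by auto
  then have "card T \<le> (\<Sum>l\<in>{..L}. card ((\<lambda>a. (l,a)) ` {a. (l,a) \<in> T}))"
    using card_UN_le[of "{..L}" "\<lambda>l. (\<lambda>a. (l,a)) ` {a. (l,a) \<in> T}"] by simp
  also have "\<dots> \<le> (\<Sum>l\<in>{..L}. 2)"
  proof (rule sum_mono)
    fix l show "card ((\<lambda>a. (l,a)) ` {a. (l,a) \<in> T}) \<le> 2"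
    proof -
      have "{a. (l,a) \<in> T} \<subseteq> {..<e}" using Tsub by auto
      then have "finite {a. (l,a) \<in> T}" by (rule finite_subset) simp
      then show ?thesis using card_image_le[of "{a. (l,a) \<in> T}" "\<lambda>a. (l,a)"] lev[of l] by linarith
    qed
  qed
  also have "\<dots> = 2*(L+1)" by simp
  finally have cT: "card T \<le> 2*(L+1)" .
  have inT: "\<forall>t\<in>T. \<forall>k. k div 2^fst t = snd t \<longrightarrow> s \<le> k \<and> k < e" unfolding T_def inU_def by auto
  have cov: "\<forall>k. s \<le> k \<and> k < e \<longrightarrow> (\<exists>t\<in>T. k div 2^fst t = snd t)" using cover by blast
  have ord: "\<forall>t\<in>T. \<forall>t'\<in>T. t \<noteq> t' \<longrightarrow>
        (\<forall>k k'. k div 2^fst t = snd t \<longrightarrow> k' div 2^fst t' = snd t' \<longrightarrow> k < k') \<or>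
        (\<forall>k k'. k div 2^fst t = snd t \<longrightarrow> k' div 2^fst t' = snd t' \<longrightarrow> k' < k)"
  proof (intro ballI impI)
    fix t t' assume "t \<in> T" "t' \<in> T" "t \<noteq> t'"
    then show "(\<forall>k k'. k div 2^fst t = snd t \<longrightarrow> k' div 2^fst t' = snd t' \<longrightarrow> k < k') \<or>
        (\<forall>k k'. k div 2^fst t = snd t \<longrightarrow> k' div 2^fst t' = snd t' \<longrightarrow> k' < k)"
      using order[of "fst t" "snd t" "fst t'" "snd t'"] by simp
  qed
  show ?thesis by (intro exI[of _ T] conjI) (fact Tsub, fact cT, fact inT, fact cov, fact ord)
qed


definition inbox :: "'n set \<Rightarrow> ('n \<Rightarrow> real set) \<Rightarrow> real^'n \<Rightarrow> bool" where
  "inbox J I x \<longleftrightarrow> (\<forall>j\<in>J. x$j \<in> I j)"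

definition sepr :: "'n set \<Rightarrow> (real^'n) set \<Rightarrow> (real^'n) set \<Rightarrow> bool" where
  "sepr J A B \<longleftrightarrow> (\<exists>i\<in>J. (\<forall>x\<in>A. \<forall>y\<in>B. x$i < y$i) \<or> (\<forall>x\<in>A. \<forall>y\<in>B. y$i < x$i))"

definition goodF :: "'n set \<Rightarrow> (real^'n) set \<Rightarrow> nat \<Rightarrow> nat \<Rightarrow> (real^'n) set set \<Rightarrow> bool" where
  "goodF J P K E F \<longleftrightarrow> finite F \<and> (\<forall>Q\<in>F. Q \<subseteq> P) \<and> card F * K \<le> card P \<and>
    (\<forall>I. (\<forall>j. is_interval (I j)) \<longrightarrow> (\<exists>S. S \<subseteq> F \<and> pairwise (sepr J) S \<and> (\<forall>Q\<in>S. \<forall>x\<in>Q. inbox J I x) \<and>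
        card {x\<in>P. inbox J I x \<and> x \<notin> \<Union>S} \<le> E))"

lemma goodF_query:
  assumes "goodF J P K E F" "\<forall>j. is_interval (I j)"
  obtains S where "S \<subseteq> F" "pairwise (sepr J) S" "\<forall>Q\<in>S. \<forall>x\<in>Q. inbox J I x"
    "card {x\<in>P. inbox J I x \<and> x \<notin> \<Union>S} \<le> E"
  using assms unfolding goodF_def by blast

lemma goodF_intro:
  assumes "finite F" "\<forall>Q\<in>F. Q \<subseteq> P" "card F * K \<le> card P"
    "\<And>I. \<forall>j. is_interval (I j) \<Longrightarrow> \<exists>S. S \<subseteq> F \<and> pairwise (sepr J) S \<and> (\<forall>Q\<in>S. \<forall>x\<in>Q. inbox J I x) \<and>
        card {x\<in>P. inbox J I x \<and> x \<notin> \<Union>S} \<le> E"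
  shows "goodF J P K E F"
  using assms unfolding goodF_def by blast

lemma goodF_basic:
  assumes "goodF J P K E F"
  shows "finite F" "\<forall>Q\<in>F. Q \<subseteq> P" "card F * K \<le> card P"
  using assms unfolding goodF_def by blast+

lemma goodF_mono:
  assumes g: "goodF J P K E F" and "E \<le> E'"
  shows "goodF J P K E' F"
proof (rule goodF_intro)
  show "finite F" "\<forall>Q\<in>F. Q \<subseteq> P" "card F * K \<le> card P" using goodF_basic[OF g] by auto
  fix I :: "'a \<Rightarrow> real set" assume "\<forall>j. is_interval (I j)"
  then obtain S where "S \<subseteq> F" "pairwise (sepr J) S" "\<forall>Q\<in>S. \<forall>x\<in>Q. inbox J I x"
    "card {x\<in>P. inbox J I x \<and> x \<notin> \<Union>S} \<le> E" by (rule goodF_query[OF g])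
  then show "\<exists>S. S \<subseteq> F \<and> pairwise (sepr J) S \<and> (\<forall>Q\<in>S. \<forall>x\<in>Q. inbox J I x) \<and>
        card {x\<in>P. inbox J I x \<and> x \<notin> \<Union>S} \<le> E'" using assms(2) by (intro exI[of _ S]) auto
qed

lemma sepr_mono: "sepr J A B \<Longrightarrow> J \<subseteq> J' \<Longrightarrow> sepr J' A B"
  unfolding sepr_def by blast

lemma sepr_sym: "sepr J A B \<Longrightarrow> sepr J B A"
  unfolding sepr_def by blast

lemma sepr_rk:
  assumes "finite P" "A \<subseteq> P" "B \<subseteq> P" "i \<in> J" "\<forall>x\<in>A. \<forall>y\<in>B. rk P i x < rk P i y"
  shows "sepr J A B"
proof -
  have "\<forall>x\<in>A. \<forall>y\<in>B. x$i < y$i"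
  proof (intro ballI)
    fix x y assume "x \<in> A" "y \<in> B"
    then show "x$i < y$i" using assms rk_less_iff[OF assms(1), of x y i] by auto
  qed
  then show ?thesis unfolding sepr_def using assms(4) by blast
qed

lemma div_less_imp: "(p::nat) div m < q div m \<Longrightarrow> p < q"
  by (meson div_le_mono not_le)

definition Cl :: "(real^'n) set \<Rightarrow> 'n \<Rightarrow> real^'n \<Rightarrow> (real^'n) set" where
  "Cl P i x = {y\<in>P. y$i = x$i}"

lemma small_bound:
  assumes fP: "finite P" and m0: "0 < m"
  shows "card {x\<in>P. rk P i x div m = b \<and> card (Cl P i x) < m} \<le> 2*m"
proof (cases "{x\<in>P. rk P i x div m = b \<and> card (Cl P i x) < m} = {}")
  case True show ?thesis by (subst True) simp
next
  case False
  define X where "X = {x\<in>P. rk P i x div m = b \<and> card (Cl P i x) < m}"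
  have fX: "finite X" using fP unfolding X_def by simp
  have Xne: "X \<noteq> {}" using False X_def by simp
  have "Max (rk P i ` X) \<in> rk P i ` X" using fX Xne by (intro Max_in) auto
  then obtain y where yX: "y \<in> X" and ry: "rk P i y = Max (rk P i ` X)" by auto
  have ymax: "rk P i x \<le> rk P i y" if "x \<in> X" for x
    using Max_ge[of "rk P i ` X" "rk P i x"] fX that ry by auto
  define Z where "Z = {z\<in>P. b*m \<le> rk P i z}"
  have bm: "b*m \<le> rk P i x \<and> rk P i x < (b+1)*m" if "x \<in> X" for x
    using that blk_iff[OF m0, of "rk P i x" b] unfolding X_def by auto
  have yZ: "y \<in> Z" using yX bm[OF yX] unfolding Z_def X_def by auto
  have fZ: "finite Z" using fP unfolding Z_def by simp
  have "Min (rk P i ` Z) \<in> rk P i ` Z" using fZ yZ by (intro Min_in) auto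
  then obtain z0 where z0Z: "z0 \<in> Z" and rz: "rk P i z0 = Min (rk P i ` Z)" by auto
  have zmin: "rk P i z0 \<le> rk P i x" if "x \<in> Z" for x
    using Min_le[of "rk P i ` Z" "rk P i x"] fZ that rz by auto
  have yP: "y \<in> P" and z0P: "z0 \<in> P" using yX z0Z unfolding X_def Z_def by auto
  define Y1 where "Y1 = {x\<in>P. rk P i x < rk P i y} - {x\<in>P. rk P i x < rk P i z0}"
  have sub: "X \<subseteq> Y1 \<union> Cl P i y"
  proof
    fix x assume xX: "x \<in> X"
    then have xP: "x \<in> P" unfolding X_def by auto
    have "x \<in> Z" using bm[OF xX] xP unfolding Z_def by auto
    then have 1: "rk P i z0 \<le> rk P i x" by (rule zmin)
    show "x \<in> Y1 \<union> Cl P i y"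
    proof (cases "rk P i x < rk P i y")
      case True then show ?thesis using 1 xP unfolding Y1_def by auto
    next
      case False
      then have "rk P i x = rk P i y" using ymax[OF xX] by simp
      then have "x$i = y$i" using rk_eq_iff[OF fP xP yP] by simp
      then show ?thesis using xP unfolding Cl_def by auto
    qed
  qed
  have s1: "{x\<in>P. rk P i x < rk P i z0} \<subseteq> {x\<in>P. rk P i x < rk P i y}"
    using zmin[OF yZ] by auto
  have "card Y1 = card {x\<in>P. rk P i x < rk P i y} - card {x\<in>P. rk P i x < rk P i z0}"
    unfolding Y1_def using fP s1 by (intro card_Diff_subset) auto
  also have "\<dots> = rk P i y - rk P i z0" using rk_below(2)[OF fP yP] rk_below(2)[OF fP z0P] by simp
  finally have cY1: "card Y1 < m" using bm[OF yX] z0Z unfolding Z_def by auto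
  have cCl: "card (Cl P i y) < m" using yX unfolding X_def by auto
  have "card X \<le> card (Y1 \<union> Cl P i y)" using sub fP unfolding Y1_def Cl_def by (intro card_mono) auto
  also have "\<dots> \<le> card Y1 + card (Cl P i y)" by (rule card_Un_le)
  finally show ?thesis using cY1 cCl unfolding X_def by linarith
qed

lemma slab:
  assumes fP: "finite P" and Ii: "is_interval (I i)" and ne: "{x\<in>P. x$i \<in> I i} \<noteq> {}"
  obtains s t where "{x\<in>P. x$i \<in> I i} = {x\<in>P. s \<le> rk P i x \<and> rk P i x \<le> t}" "t < card P"
proof -
  define Pi where "Pi = {x\<in>P. x$i \<in> I i}"
  have fPi: "finite Pi" using fP unfolding Pi_def by simp
  have "Min (rk P i ` Pi) \<in> rk P i ` Pi" using fPi ne unfolding Pi_def by (intro Min_in) auto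
  then obtain xs where xs: "xs \<in> Pi" and rs: "rk P i xs = Min (rk P i ` Pi)" by auto
  have "Max (rk P i ` Pi) \<in> rk P i ` Pi" using fPi ne unfolding Pi_def by (intro Max_in) auto
  then obtain xt where xt: "xt \<in> Pi" and rt: "rk P i xt = Max (rk P i ` Pi)" by auto
  have xsP: "xs \<in> P" and xtP: "xt \<in> P" using xs xt unfolding Pi_def by auto
  have eq: "Pi = {x\<in>P. rk P i xs \<le> rk P i x \<and> rk P i x \<le> rk P i xt}"
  proof (intro set_eqI iffI)
    fix x assume x: "x \<in> Pi"
    then show "x \<in> {x\<in>P. rk P i xs \<le> rk P i x \<and> rk P i x \<le> rk P i xt}"
      using Min_le[OF finite_imageI[OF fPi], of "rk P i x"] Max_ge[OF finite_imageI[OF fPi], of "rk P i x"]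
        rs rt unfolding Pi_def by auto
  next
    fix x assume x: "x \<in> {x\<in>P. rk P i xs \<le> rk P i x \<and> rk P i x \<le> rk P i xt}"
    then have xP: "x \<in> P" and a: "rk P i xs \<le> rk P i x" and b: "rk P i x \<le> rk P i xt" by auto
    have "xs$i \<le> x$i" using a rk_less_iff[OF fP xP xsP, of i] by (meson leD leI)
    moreover have "x$i \<le> xt$i" using b rk_less_iff[OF fP xtP xP, of i] by (meson leD leI)
    moreover have "xs$i \<in> I i" "xt$i \<in> I i" using xs xt unfolding Pi_def by auto
    ultimately have "x$i \<in> I i" using Ii unfolding is_interval_1 by blast
    then show "x \<in> Pi" using xP unfolding Pi_def by auto
  qed
  show ?thesis using that[of "rk P i xs" "rk P i xt"] eq rk_bound[OF fP xtP] unfolding Pi_def by auto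
qed


lemma inbox_single: "inbox {i} I x \<longleftrightarrow> x$i \<in> I i"
  by (simp add: inbox_def)

lemma base:
  assumes fP: "finite P" and K: "1 \<le> K"
  shows "\<exists>F. goodF {i} P K (12*K) F"
proof -
  define n where "n = card P"
  define m where "m = 3*K"
  have m0: "0 < m" using K m_def by simp
  show ?thesis
  proof (cases "n < m")
    case True
    have "goodF {i} P K (12*K) {}"
    proof (rule goodF_intro)
      fix I :: "'a \<Rightarrow> real set"
      have "card {x\<in>P. inbox {i} I x \<and> x \<notin> \<Union>{}} \<le> card P" by (rule card_mono[OF fP]) auto
      then show "\<exists>S. S \<subseteq> {} \<and> pairwise (sepr {i}) S \<and> (\<forall>Q\<in>S. \<forall>x\<in>Q. inbox {i} I x) \<and>
          card {x\<in>P. inbox {i} I x \<and> x \<notin> \<Union>S} \<le> 12*K"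
        using True unfolding n_def m_def by (intro exI[of _ "{}"]) auto
    qed auto
    then show ?thesis by blast
  next
    case False
    then have mn: "m \<le> n" by simp
    define W where "W a = {x\<in>P. rk P i x div m = a}" for a
    define Big where "Big = Cl P i ` {x\<in>P. m \<le> card (Cl P i x)}"
    define F where "F = W ` {..(n-1) div m} \<union> Big"
    have fBig: "finite Big" unfolding Big_def using fP by simp
    have ClP: "Cl P i x \<subseteq> P" for x unfolding Cl_def by auto
    have Cleq: "Cl P i x = Cl P i y" if "y \<in> Cl P i x" for x y
      using that unfolding Cl_def by auto
    have Bigdisj: "pairwise disjnt Big"
    proof (rule pairwiseI)
      fix C1 C2 assume "C1 \<in> Big" "C2 \<in> Big" "C1 \<noteq> C2"
      then obtain x1 x2 where "C1 = Cl P i x1" "C2 = Cl P i x2" unfolding Big_def by auto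
      then show "disjnt C1 C2" using \<open>C1 \<noteq> C2\<close> Cleq unfolding disjnt_def by blast
    qed
    have cBig: "card Big * m \<le> n"
    proof -
      have "card Big * m = (\<Sum>C\<in>Big. m)" by simp
      also have "\<dots> \<le> (\<Sum>C\<in>Big. card C)" by (rule sum_mono) (auto simp: Big_def)
      also have "\<dots> = card (\<Union>Big)" using Bigdisj fP ClP
        by (intro card_Union_disjoint[symmetric]) (auto simp: Big_def intro: finite_subset)
      also have "\<dots> \<le> n" unfolding n_def using fP ClP by (intro card_mono) (auto simp: Big_def)
      finally show ?thesis .
    qed
    have cW: "card (W ` {..(n-1) div m}) \<le> (n-1) div m + 1"
      using card_image_le[of "{..(n-1) div m}" W] by simp
    have "(n-1) div m * m \<le> n - 1" by (rule div_times_less_eq_dividend)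
    moreover have "((n-1) div m + 1) * m = (n-1) div m * m + m" by (simp add: algebra_simps)
    ultimately have cW2: "((n-1) div m + 1) * m \<le> 2*n" using mn by linarith
    have "card F \<le> card (W ` {..(n-1) div m}) + card Big" unfolding F_def by (rule card_Un_le)
    then have "card F * m \<le> (card (W ` {..(n-1) div m}) + card Big) * m" by simp
    also have "\<dots> = card (W ` {..(n-1) div m}) * m + card Big * m" by (simp add: algebra_simps)
    also have "\<dots> \<le> ((n-1) div m + 1) * m + card Big * m" using cW by (intro add_mono mult_right_mono) auto
    finally have "card F * m \<le> 3*n" using cW2 cBig by linarith
    then have cF: "card F * K \<le> card P" unfolding m_def n_def by simp
    have WP: "W a \<subseteq> P" for a unfolding W_def by auto
    have fF: "finite F" unfolding F_def using fBig by simp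
    have FP: "\<forall>Q\<in>F. Q \<subseteq> P" unfolding F_def Big_def using WP ClP by auto
    have rkn: "rk P i x div m \<le> (n-1) div m" if "x \<in> P" for x
      using rk_bound[OF fP that, of i] unfolding n_def by (intro div_le_mono) simp
    have Clrk: "rk P i y = rk P i x" if "x \<in> P" "y \<in> Cl P i x" for x y
      using that rk_eq_iff[OF fP, of y x i] unfolding Cl_def by auto
    have "goodF {i} P K (12*K) F"
    proof (rule goodF_intro[OF fF FP cF])
      fix I :: "'a \<Rightarrow> real set" assume Iint: "\<forall>j. is_interval (I j)"
      define Pi where "Pi = {x\<in>P. x$i \<in> I i}"
      show "\<exists>S. S \<subseteq> F \<and> pairwise (sepr {i}) S \<and> (\<forall>Q\<in>S. \<forall>x\<in>Q. inbox {i} I x) \<and>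
          card {x\<in>P. inbox {i} I x \<and> x \<notin> \<Union>S} \<le> 12*K"
      proof (cases "Pi = {}")
        case True
        then have e: "{x\<in>P. inbox {i} I x} = {}" unfolding Pi_def inbox_single by auto
        show ?thesis by (intro exI[of _ "{}"]) (simp add: e)
      next
        case False
        have Ii: "is_interval (I i)" using Iint by simp
        have ne: "{x\<in>P. x$i \<in> I i} \<noteq> {}" using False unfolding Pi_def by simp
        obtain s t where Pist0: "{x\<in>P. x$i \<in> I i} = {x\<in>P. s \<le> rk P i x \<and> rk P i x \<le> t}"
          and "t < card P" by (rule slab[of P I i, OF fP Ii ne])
        have Pist: "Pi = {x\<in>P. s \<le> rk P i x \<and> rk P i x \<le> t}" unfolding Pi_def by (rule Pist0)
        define SW where "SW = W ` {a. a \<le> (n-1) div m \<and> W a \<subseteq> Pi}"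
        define SB where "SB = {C\<in>Big. C \<subseteq> Pi \<and> (\<forall>a. W a \<subseteq> Pi \<longrightarrow> C \<inter> W a = {})}"
        define S where "S = SW \<union> SB"
        have SF: "S \<subseteq> F" unfolding S_def SW_def SB_def F_def by auto
        have SPi: "Q \<subseteq> Pi" if "Q \<in> S" for Q using that unfolding S_def SW_def SB_def by auto
        have inb: "\<forall>Q\<in>S. \<forall>x\<in>Q. inbox {i} I x" using SPi unfolding Pi_def inbox_single by blast
        have WW: "sepr {i} (W a) (W b)" if "a < b" for a b
        proof (rule sepr_rk[OF fP WP WP])
          show "i \<in> {i}" by simp
          show "\<forall>x\<in>W a. \<forall>y\<in>W b. rk P i x < rk P i y"
            using that by (auto simp: W_def dest!: div_less_imp[of _ m])
        qed
        have WC: "sepr {i} (W a) C" if CSB: "C \<in> SB" and Wa: "W a \<subseteq> Pi" for a C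
        proof -
          obtain z where z: "z \<in> P" "C = Cl P i z" using CSB unfolding SB_def Big_def by auto
          define c where "c = rk P i z div m"
          have zC: "z \<in> C" using z unfolding Cl_def by auto
          have Crk: "rk P i y div m = c" if "y \<in> C" for y using Clrk[OF z(1)] that z(2) c_def by simp
          have "C \<inter> W a = {}" using CSB Wa unfolding SB_def by auto
          then have "c \<noteq> a" using zC z(1) unfolding W_def c_def by auto
          then show ?thesis
          proof (cases "a < c")
            case True
            show ?thesis
            proof (rule sepr_rk[OF fP WP])
              show "C \<subseteq> P" "i \<in> {i}" using z ClP by auto
              show "\<forall>x\<in>W a. \<forall>y\<in>C. rk P i x < rk P i y"
              proof (intro ballI)
                fix x y assume "x \<in> W a" "y \<in> C"
                then have "rk P i x div m < rk P i y div m" using Crk True unfolding W_def by auto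
                then show "rk P i x < rk P i y" by (rule div_less_imp)
              qed
            qed
          next
            case False
            then have "c < a" using \<open>c \<noteq> a\<close> by simp
            have "sepr {i} C (W a)"
            proof (rule sepr_rk[OF fP _ WP])
              show "C \<subseteq> P" "i \<in> {i}" using z ClP by auto
              show "\<forall>x\<in>C. \<forall>y\<in>W a. rk P i x < rk P i y"
              proof (intro ballI)
                fix x y assume "x \<in> C" "y \<in> W a"
                then have "rk P i x div m < rk P i y div m" using Crk \<open>c < a\<close> unfolding W_def by auto
                then show "rk P i x < rk P i y" by (rule div_less_imp)
              qed
            qed
            then show ?thesis by (rule sepr_sym)
          qed
        qed
        have CC: "sepr {i} C1 C2" if "C1 \<in> Big" "C2 \<in> Big" "C1 \<noteq> C2" for C1 C2
        proof -
          have C12: "C1 \<in> Big" "C2 \<in> Big" "C1 \<noteq> C2" by fact+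
          obtain z1 z2 where z: "z1 \<in> P" "C1 = Cl P i z1" "z2 \<in> P" "C2 = Cl P i z2"
            using C12 unfolding Big_def by auto
          have "z1$i \<noteq> z2$i" using C12 z unfolding Cl_def by auto
          then have "z1$i < z2$i \<or> z2$i < z1$i" by auto
          then show ?thesis unfolding sepr_def using z unfolding Cl_def by auto
        qed
        have pw: "pairwise (sepr {i}) S"
        proof (rule pairwiseI)
          fix Q1 Q2 assume Q: "Q1 \<in> S" "Q2 \<in> S" "Q1 \<noteq> Q2"
          show "sepr {i} Q1 Q2"
          proof (cases "Q1 \<in> SW")
            case Q1W: True
            then obtain a where a: "Q1 = W a" "W a \<subseteq> Pi" unfolding SW_def by auto
            show ?thesis
            proof (cases "Q2 \<in> SW")
              case True
              then obtain b where b: "Q2 = W b" unfolding SW_def by auto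
              then have "a \<noteq> b" using a Q by auto
              then show ?thesis using WW[of a b] WW[of b a] sepr_sym a b by (cases "a < b") auto
            next
              case False
              then have "Q2 \<in> SB" using Q unfolding S_def by auto
              then show ?thesis using WC a by simp
            qed
          next
            case Q1nW: False
            then have Q1B: "Q1 \<in> SB" using Q unfolding S_def by auto
            show ?thesis
            proof (cases "Q2 \<in> SW")
              case True
              then obtain b where b: "Q2 = W b" "W b \<subseteq> Pi" unfolding SW_def by auto
              then show ?thesis using WC[OF Q1B b(2)] sepr_sym by simp
            next
              case False
              then have "Q2 \<in> SB" using Q unfolding S_def by auto
              then show ?thesis using CC Q1B Q(3) unfolding SB_def by auto
            qed
          qed
        qed
        define small where "small b = {x\<in>P. rk P i x div m = b \<and> card (Cl P i x) < m}" for b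
        have lsub: "{x\<in>P. inbox {i} I x \<and> x \<notin> \<Union>S} \<subseteq> small (s div m) \<union> small (t div m)"
        proof
          fix x assume "x \<in> {x\<in>P. inbox {i} I x \<and> x \<notin> \<Union>S}"
          then have xP: "x \<in> P" and xPi: "x \<in> Pi" and xS: "x \<notin> \<Union>S"
            unfolding Pi_def inbox_single by auto
          define a where "a = rk P i x div m"
          have xW: "x \<in> W a" using xP unfolding W_def a_def by simp
          have nW: "\<not> W a \<subseteq> Pi"
          proof
            assume "W a \<subseteq> Pi"
            then have "W a \<in> S" using rkn[OF xP] unfolding S_def SW_def a_def by auto
            then show False using xS xW by auto
          qed
          then obtain z where zW: "z \<in> W a" and zPi: "z \<notin> Pi" by auto
          have zP: "z \<in> P" using zW unfolding W_def by auto
          have rz: "rk P i z div m = a" using zW unfolding W_def by auto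
          have rx: "s \<le> rk P i x" "rk P i x \<le> t" using xPi unfolding Pist by auto
          have "rk P i z < s \<or> t < rk P i z" using zPi zP unfolding Pist by auto
          then have ast: "a = s div m \<or> a = t div m"
          proof
            assume h: "rk P i z < s"
            have "a \<le> s div m" using div_le_mono[of "rk P i z" s m] h rz by simp
            moreover have "s div m \<le> a" using div_le_mono[of s "rk P i x" m] rx unfolding a_def by simp
            ultimately show ?thesis by simp
          next
            assume h: "t < rk P i z"
            have "t div m \<le> a" using div_le_mono[of t "rk P i z" m] h rz by simp
            moreover have "a \<le> t div m" using div_le_mono[of "rk P i x" t m] rx unfolding a_def by simp
            ultimately show ?thesis by simp
          qed
          have "card (Cl P i x) < m"
          proof (rule ccontr)
            assume "\<not> card (Cl P i x) < m"
            then have CB: "Cl P i x \<in> Big" using xP unfolding Big_def by auto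
            have CPi: "Cl P i x \<subseteq> Pi" using xPi unfolding Pi_def Cl_def by auto
            have "Cl P i x \<inter> W b = {}" if "W b \<subseteq> Pi" for b
            proof -
              have "b \<noteq> a" using that nW by auto
              then show ?thesis using Clrk[OF xP] unfolding W_def a_def by auto
            qed
            then have "Cl P i x \<in> S" using CB CPi unfolding S_def SB_def by auto
            moreover have "x \<in> Cl P i x" using xP unfolding Cl_def by auto
            ultimately show False using xS by auto
          qed
          then show "x \<in> small (s div m) \<union> small (t div m)"
            using ast xP unfolding small_def a_def by auto
        qed
        have "card {x\<in>P. inbox {i} I x \<and> x \<notin> \<Union>S} \<le> card (small (s div m) \<union> small (t div m))"
          using fP lsub unfolding small_def by (intro card_mono) auto
        also have "\<dots> \<le> card (small (s div m)) + card (small (t div m))" by (rule card_Un_le)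
        also have "\<dots> \<le> 2*m + 2*m" using small_bound[OF fP m0, of i] unfolding small_def
          by (intro add_mono) auto
        also have "\<dots> \<le> 12*K" unfolding m_def by simp
        finally show ?thesis using SF pw inb by (intro exI[of _ S]) auto
      qed
    qed
    then show ?thesis by blast
  qed
qed


definition Lg :: "nat \<Rightarrow> nat" where "Lg n = (LEAST L. n \<le> 2^L)"

lemma Lg_ge: "n \<le> 2^(Lg n)"
  unfolding Lg_def by (rule LeastI[of _ n]) (simp add: less_imp_le)

lemma Lg_mono: "m \<le> n \<Longrightarrow> Lg m \<le> Lg n"
  using Lg_ge[of n] unfolding Lg_def by (intro Least_le) linarith

lemma Lg_ln:
  assumes n2: "2 \<le> n"
  shows "real (Lg n) + 1 \<le> 6 * ln (real n)"
proof -
  have l2: "2/3 \<le> ln (2::real)" by (rule ln2_ge_two_thirds)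
  have "ln 2 \<le> ln (real n)" using n2 by simp
  then have lnn: "2/3 \<le> ln (real n)" using l2 by linarith
  show ?thesis
  proof (cases "Lg n = 0")
    case True then show ?thesis using lnn by simp
  next
    case False
    define k where "k = Lg n - 1"
    have "k < Lg n" using False k_def by simp
    then have "\<not> n \<le> 2^k" unfolding Lg_def by (rule not_less_Least)
    then have "2^k < n" by simp
    then have "(2::real)^k < real n" by (metis of_nat_less_iff of_nat_numeral of_nat_power)
    then have "ln ((2::real)^k) < ln (real n)" by (intro ln_less_cancel_iff[THEN iffD2]) auto
    then have a: "real k * ln 2 < ln (real n)" by (simp add: ln_realpow)
    have "real k * (2/3) \<le> real k * ln 2" using l2 by (intro mult_left_mono) auto
    then have "real k \<le> 3/2 * ln (real n)" using a by linarith
    moreover have "real (Lg n) = real k + 1" using False k_def by simp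
    ultimately show ?thesis using lnn by linarith
  qed
qed

definition Claim :: "'n::finite set \<Rightarrow> bool" where
  "Claim J \<longleftrightarrow> (\<exists>A. \<forall>(P::(real^'n) set) K. finite P \<longrightarrow> 1 \<le> K \<longrightarrow>
      (\<exists>F. goodF J P K (A*K*(Lg (card P)+1)^(2*(card J - 1))) F))"

lemma claim_base: "Claim {i}"
  unfolding Claim_def
proof (intro exI[of _ "12::nat"] allI impI)
  fix P :: "(real^'a) set" and K :: nat assume "finite P" "1 \<le> K"
  then show "\<exists>F. goodF {i} P K (12*K*(Lg (card P)+1)^(2*(card {i} - 1))) F"
    using base[of P K i] by simp
qed

lemma claim_step:
  assumes cl: "Claim J" and iJ: "i \<notin> J" and Jne: "J \<noteq> {}" and fJ: "finite J"
  shows "Claim (insert i J)"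
proof -
  obtain A where A: "\<forall>(P::(real^'a) set) K. finite P \<longrightarrow> 1 \<le> K \<longrightarrow>
      (\<exists>F. goodF J P K (A*K*(Lg (card P)+1)^(2*(card J - 1))) F)"
    using cl unfolding Claim_def by blast
  define e where "e = 2*(card J - 1)"
  have "card J \<ge> 1" using Jne fJ by (simp add: Suc_le_eq card_gt_0_iff)
  then have ce: "2*(card (insert i J) - 1) = e + 2" using iJ fJ unfolding e_def by simp
  show ?thesis unfolding Claim_def
  proof (intro exI[of _ "2*A"] allI impI)
    fix P :: "(real^'a) set" and K :: nat assume fP: "finite P" and K: "1 \<le> K"
    define n where "n = card P"
    define L where "L = Lg n"
    define K' where "K' = K*(L+1)"
    have K'1: "1 \<le> K'" using K by (simp add: K'_def)
    define E' where "E' = A*K'*(L+1)^e"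
    have "\<forall>Q. \<exists>F. finite Q \<longrightarrow> goodF J Q K' (A*K'*(Lg (card Q)+1)^e) F"
    proof
      fix Q :: "(real^'a) set"
      show "\<exists>F. finite Q \<longrightarrow> goodF J Q K' (A*K'*(Lg (card Q)+1)^e) F"
      proof (cases "finite Q")
        case True
        then show ?thesis using A[rule_format, OF True K'1] unfolding e_def by auto
      qed auto
    qed
    then have "\<exists>G. \<forall>Q. finite Q \<longrightarrow> goodF J Q K' (A*K'*(Lg (card Q)+1)^e) (G Q)" by (rule choice)
    then obtain G where G0: "\<forall>Q. finite Q \<longrightarrow> goodF J Q K' (A*K'*(Lg (card Q)+1)^e) (G Q)"
      by (rule exE)
    note G = G0[rule_format]
    have GQ: "goodF J Q K' E' (G Q)" if "Q \<subseteq> P" for Q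
    proof -
      have fQ: "finite Q" using that fP by (rule finite_subset)
      have "Lg (card Q) \<le> L" unfolding L_def n_def using that fP by (intro Lg_mono card_mono)
      then have "A*K'*(Lg (card Q)+1)^e \<le> E'" unfolding E'_def
        by (intro mult_left_mono power_mono) auto
      then show ?thesis using G[OF fQ] goodF_mono by blast
    qed
    define D where "D t = {x\<in>P. rk P i x div 2^(fst t) = snd t}" for t :: "nat \<times> nat"
    define Idx where "Idx = {..L} \<times> {..<n}"
    define F where "F = (\<Union>t\<in>Idx. G (D t))"
    have DP: "D t \<subseteq> P" for t unfolding D_def by auto
    have gD: "goodF J (D t) K' E' (G (D t))" for t using GQ[OF DP] .
    have fIdx: "finite Idx" unfolding Idx_def by simp
    have fF: "finite F" unfolding F_def using fIdx goodF_basic(1)[OF gD] by simp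
    have FP: "\<forall>Q\<in>F. Q \<subseteq> P" unfolding F_def using goodF_basic(2)[OF gD] DP by blast
    have cF: "card F * K \<le> card P"
    proof -
      have "card F \<le> (\<Sum>t\<in>Idx. card (G (D t)))" unfolding F_def by (rule card_UN_le[OF fIdx])
      then have "card F * K' \<le> (\<Sum>t\<in>Idx. card (G (D t))) * K'" by simp
      also have "\<dots> = (\<Sum>t\<in>Idx. card (G (D t)) * K')" by (simp add: sum_distrib_right)
      also have "\<dots> \<le> (\<Sum>t\<in>Idx. card (D t))" by (intro sum_mono goodF_basic(3)[OF gD])
      also have "\<dots> = (\<Sum>l\<in>{..L}. \<Sum>a\<in>{..<n}. card (D (l,a)))"
        unfolding Idx_def by (simp add: sum.cartesian_product)
      also have "\<dots> \<le> (\<Sum>l\<in>{..L}. n)"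
      proof (rule sum_mono)
        fix l
        have "(\<Sum>a\<in>{..<n}. card (D (l,a))) = card (\<Union>a\<in>{..<n}. D (l,a))"
          using fP DP by (intro card_UN_disjoint[symmetric]) (auto simp: D_def intro: finite_subset)
        also have "\<dots> \<le> n" unfolding n_def using fP DP by (intro card_mono) auto
        finally show "(\<Sum>a\<in>{..<n}. card (D (l,a))) \<le> n" .
      qed
      also have "\<dots> = (L+1)*n" by simp
      finally have "card F * K * (L+1) \<le> n * (L+1)" unfolding K'_def by (simp add: algebra_simps)
      then have "card F * K \<le> n" using mult_le_cancel2[of "card F * K" "L+1" n] by simp
      then show ?thesis unfolding n_def by simp
    qed
    have "goodF (insert i J) P K (2*A*K*(Lg (card P)+1)^(2*(card (insert i J) - 1))) F"
    proof (rule goodF_intro[OF fF FP cF])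
      fix I :: "'a \<Rightarrow> real set" assume Iint: "\<forall>j. is_interval (I j)"
      define Pi where "Pi = {x\<in>P. x$i \<in> I i}"
      have target: "card T * E' \<le> 2*A*K*(Lg (card P)+1)^(2*(card (insert i J) - 1))"
        if "card T \<le> 2*(L+1)" for T :: "(nat\<times>nat) set"
      proof -
        have "card T * E' \<le> 2*(L+1) * E'" by (rule mult_right_mono[OF that]) simp
        also have "\<dots> = 2*A*K*(L+1)^(e+2)" unfolding E'_def K'_def by (simp add: algebra_simps power_add power2_eq_square)
        finally show ?thesis unfolding ce L_def n_def .
      qed
      show "\<exists>S. S \<subseteq> F \<and> pairwise (sepr (insert i J)) S \<and> (\<forall>Q\<in>S. \<forall>x\<in>Q. inbox (insert i J) I x) \<and>
          card {x\<in>P. inbox (insert i J) I x \<and> x \<notin> \<Union>S} \<le> 2*A*K*(Lg (card P)+1)^(2*(card (insert i J) - 1))"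
      proof (cases "Pi = {}")
        case True
        then have e: "{x\<in>P. inbox (insert i J) I x} = {}" unfolding Pi_def inbox_def by auto
        show ?thesis by (intro exI[of _ "{}"]) (simp add: e)
      next
        case False
        have Ii: "is_interval (I i)" using Iint by simp
        have ne: "{x\<in>P. x$i \<in> I i} \<noteq> {}" using False unfolding Pi_def by simp
        obtain s t where Pist0: "{x\<in>P. x$i \<in> I i} = {x\<in>P. s \<le> rk P i x \<and> rk P i x \<le> t}"
          and tn: "t < card P" by (rule slab[of P I i, OF fP Ii ne])
        have Pist: "Pi = {x\<in>P. s \<le> rk P i x \<and> rk P i x \<le> t}" unfolding Pi_def by (rule Pist0)
        have tL: "t+1 \<le> 2^L" using tn Lg_ge[of n] unfolding L_def n_def by simp
        obtain T where H: "T \<subseteq> {..L} \<times> {..<t+1} \<and> card T \<le> 2*(L+1) \<and>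
     (\<forall>\<tau>\<in>T. \<forall>k. k div 2^fst \<tau> = snd \<tau> \<longrightarrow> s \<le> k \<and> k < t+1) \<and>
     (\<forall>k. s \<le> k \<and> k < t+1 \<longrightarrow> (\<exists>\<tau>\<in>T. k div 2^fst \<tau> = snd \<tau>)) \<and>
     (\<forall>\<tau>\<in>T. \<forall>\<tau>'\<in>T. \<tau> \<noteq> \<tau>' \<longrightarrow>
        (\<forall>k k'. k div 2^fst \<tau> = snd \<tau> \<longrightarrow> k' div 2^fst \<tau>' = snd \<tau>' \<longrightarrow> k < k') \<or>
        (\<forall>k k'. k div 2^fst \<tau> = snd \<tau> \<longrightarrow> k' div 2^fst \<tau>' = snd \<tau>' \<longrightarrow> k' < k))"
          using dyadic[OF tL, of s] by (rule exE)
        note Tsub = H[THEN conjunct1]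
        note cT = H[THEN conjunct2, THEN conjunct1]
        note inT = H[THEN conjunct2, THEN conjunct2, THEN conjunct1]
        note cov = H[THEN conjunct2, THEN conjunct2, THEN conjunct2, THEN conjunct1]
        note ord = H[THEN conjunct2, THEN conjunct2, THEN conjunct2, THEN conjunct2]
        have fT: "finite T" using Tsub by (rule finite_subset) simp
        have TIdx: "T \<subseteq> Idx" using Tsub tn unfolding Idx_def n_def by auto
        have DPi: "D \<tau> \<subseteq> Pi" if "\<tau> \<in> T" for \<tau>
        proof
          fix x assume "x \<in> D \<tau>"
          then have xP: "x \<in> P" and r: "rk P i x div 2^fst \<tau> = snd \<tau>" unfolding D_def by auto
          have "s \<le> rk P i x \<and> rk P i x < t+1" by (rule inT[rule_format, OF that r])
          then show "x \<in> Pi" using xP unfolding Pist by auto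
        qed
        have "\<forall>\<tau>\<in>T. \<exists>S. S \<subseteq> G (D \<tau>) \<and> pairwise (sepr J) S \<and> (\<forall>Q\<in>S. \<forall>x\<in>Q. inbox J I x) \<and>
           card {x\<in>D \<tau>. inbox J I x \<and> x \<notin> \<Union>S} \<le> E'"
        proof
          fix \<tau> assume "\<tau> \<in> T"
          obtain S where "S \<subseteq> G (D \<tau>)" "pairwise (sepr J) S" "\<forall>Q\<in>S. \<forall>x\<in>Q. inbox J I x"
            "card {x\<in>D \<tau>. inbox J I x \<and> x \<notin> \<Union>S} \<le> E'" by (rule goodF_query[OF gD Iint])
          then show "\<exists>S. S \<subseteq> G (D \<tau>) \<and> pairwise (sepr J) S \<and> (\<forall>Q\<in>S. \<forall>x\<in>Q. inbox J I x) \<and>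
           card {x\<in>D \<tau>. inbox J I x \<and> x \<notin> \<Union>S} \<le> E'" by (intro exI[of _ S] conjI)
        qed
        then have "\<exists>SS. \<forall>\<tau>\<in>T. SS \<tau> \<subseteq> G (D \<tau>) \<and> pairwise (sepr J) (SS \<tau>) \<and> (\<forall>Q\<in>SS \<tau>. \<forall>x\<in>Q. inbox J I x) \<and>
           card {x\<in>D \<tau>. inbox J I x \<and> x \<notin> \<Union>(SS \<tau>)} \<le> E'" by (rule bchoice)
        then obtain SS where SS0: "\<forall>\<tau>\<in>T. SS \<tau> \<subseteq> G (D \<tau>) \<and> pairwise (sepr J) (SS \<tau>) \<and> (\<forall>Q\<in>SS \<tau>. \<forall>x\<in>Q. inbox J I x) \<and>
           card {x\<in>D \<tau>. inbox J I x \<and> x \<notin> \<Union>(SS \<tau>)} \<le> E'" by (rule exE)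
        have SS: "SS \<tau> \<subseteq> G (D \<tau>) \<and> pairwise (sepr J) (SS \<tau>) \<and> (\<forall>Q\<in>SS \<tau>. \<forall>x\<in>Q. inbox J I x) \<and>
           card {x\<in>D \<tau>. inbox J I x \<and> x \<notin> \<Union>(SS \<tau>)} \<le> E'" if "\<tau> \<in> T" for \<tau>
          using SS0 that by (rule bspec)
        note SS1 = SS[THEN conjunct1]
        note SS2 = SS[THEN conjunct2, THEN conjunct1]
        note SS3 = SS[THEN conjunct2, THEN conjunct2, THEN conjunct1]
        note SS4 = SS[THEN conjunct2, THEN conjunct2, THEN conjunct2]
        define S where "S = (\<Union>\<tau>\<in>T. SS \<tau>)"
        have SF: "S \<subseteq> F"
        proof
          fix Q assume "Q \<in> S"
          then obtain \<tau> where \<tau>: "\<tau> \<in> T" "Q \<in> SS \<tau>" unfolding S_def by auto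
          then have "Q \<in> G (D \<tau>)" using SS1[OF \<tau>(1)] by auto
          then show "Q \<in> F" using TIdx \<tau>(1) unfolding F_def by auto
        qed
        have QD: "Q \<subseteq> D \<tau>" if "\<tau> \<in> T" "Q \<in> SS \<tau>" for \<tau> Q
        proof -
          have "Q \<in> G (D \<tau>)" using SS1[OF that(1)] that(2) by auto
          then show ?thesis using goodF_basic(2)[OF gD] by auto
        qed
        have inb: "\<forall>Q\<in>S. \<forall>x\<in>Q. inbox (insert i J) I x"
        proof (intro ballI)
          fix Q x assume "Q \<in> S" "x \<in> Q"
          then obtain \<tau> where \<tau>: "\<tau> \<in> T" "Q \<in> SS \<tau>" unfolding S_def by auto
          have "inbox J I x" using SS3[OF \<tau>(1)] \<tau>(2) \<open>x \<in> Q\<close> by auto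
          moreover have "x \<in> Pi" using QD[OF \<tau>] DPi[OF \<tau>(1)] \<open>x \<in> Q\<close> by blast
          ultimately show "inbox (insert i J) I x" unfolding inbox_def Pi_def by auto
        qed
        have pw: "pairwise (sepr (insert i J)) S"
        proof (rule pairwiseI)
          fix Q1 Q2 assume Q: "Q1 \<in> S" "Q2 \<in> S" "Q1 \<noteq> Q2"
          then obtain \<tau>1 \<tau>2 where t1: "\<tau>1 \<in> T" "Q1 \<in> SS \<tau>1" and t2: "\<tau>2 \<in> T" "Q2 \<in> SS \<tau>2"
            unfolding S_def by auto
          show "sepr (insert i J) Q1 Q2"
          proof (cases "\<tau>1 = \<tau>2")
            case True
            then have "Q2 \<in> SS \<tau>1" using t2(2) by simp
            then have "sepr J Q1 Q2" by (rule pairwiseD[OF SS2[OF t1(1)] t1(2) _ Q(3)])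
            then show ?thesis by (rule sepr_mono) auto
          next
            case False
            have Q1P: "Q1 \<subseteq> P" and Q2P: "Q2 \<subseteq> P" using QD[OF t1] QD[OF t2] DP by blast+
            have r1: "rk P i x div 2^fst \<tau>1 = snd \<tau>1" if "x \<in> Q1" for x using QD[OF t1] that unfolding D_def by auto
            have r2: "rk P i x div 2^fst \<tau>2 = snd \<tau>2" if "x \<in> Q2" for x using QD[OF t2] that unfolding D_def by auto
            have "(\<forall>k k'. k div 2^fst \<tau>1 = snd \<tau>1 \<longrightarrow> k' div 2^fst \<tau>2 = snd \<tau>2 \<longrightarrow> k < k') \<or>
              (\<forall>k k'. k div 2^fst \<tau>1 = snd \<tau>1 \<longrightarrow> k' div 2^fst \<tau>2 = snd \<tau>2 \<longrightarrow> k' < k)"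
              by (rule ord[rule_format, OF t1(1) t2(1) False])
            then show ?thesis
            proof
              assume h: "\<forall>k k'. k div 2^fst \<tau>1 = snd \<tau>1 \<longrightarrow> k' div 2^fst \<tau>2 = snd \<tau>2 \<longrightarrow> k < k'"
              show ?thesis
              proof (rule sepr_rk[OF fP Q1P Q2P])
                show "i \<in> insert i J" by simp
                show "\<forall>x\<in>Q1. \<forall>y\<in>Q2. rk P i x < rk P i y"
                proof (intro ballI)
                  fix x y assume "x \<in> Q1" "y \<in> Q2"
                  then show "rk P i x < rk P i y" using h[rule_format, OF r1 r2] by simp
                qed
              qed
            next
              assume h: "\<forall>k k'. k div 2^fst \<tau>1 = snd \<tau>1 \<longrightarrow> k' div 2^fst \<tau>2 = snd \<tau>2 \<longrightarrow> k' < k"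
              have "sepr (insert i J) Q2 Q1"
              proof (rule sepr_rk[OF fP Q2P Q1P])
                show "i \<in> insert i J" by simp
                show "\<forall>x\<in>Q2. \<forall>y\<in>Q1. rk P i x < rk P i y"
                proof (intro ballI)
                  fix x y assume "x \<in> Q2" "y \<in> Q1"
                  then show "rk P i x < rk P i y" using h[rule_format, OF r1 r2] by simp
                qed
              qed
              then show ?thesis by (rule sepr_sym)
            qed
          qed
        qed
        define Lo where "Lo \<tau> = {x\<in>D \<tau>. inbox J I x \<and> x \<notin> \<Union>(SS \<tau>)}" for \<tau>
        have lsub: "{x\<in>P. inbox (insert i J) I x \<and> x \<notin> \<Union>S} \<subseteq> (\<Union>\<tau>\<in>T. Lo \<tau>)"
        proof
          fix x assume x: "x \<in> {x\<in>P. inbox (insert i J) I x \<and> x \<notin> \<Union>S}"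
          then have xP: "x \<in> P" and xPi: "x \<in> Pi" and xJ: "inbox J I x" and xS: "x \<notin> \<Union>S"
            unfolding Pi_def inbox_def by auto
          have "s \<le> rk P i x \<and> rk P i x < t+1" using xPi unfolding Pist by auto
          then have "\<exists>\<tau>\<in>T. rk P i x div 2^fst \<tau> = snd \<tau>" by (rule cov[rule_format])
          then obtain \<tau> where \<tau>: "\<tau> \<in> T" "rk P i x div 2^fst \<tau> = snd \<tau>" by blast
          have "x \<in> D \<tau>" using xP \<tau>(2) unfolding D_def by simp
          moreover have "x \<notin> \<Union>(SS \<tau>)" using xS \<tau>(1) unfolding S_def by auto
          ultimately show "x \<in> (\<Union>\<tau>\<in>T. Lo \<tau>)" using \<tau>(1) xJ unfolding Lo_def by auto
        qed
        have "card {x\<in>P. inbox (insert i J) I x \<and> x \<notin> \<Union>S} \<le> card (\<Union>\<tau>\<in>T. Lo \<tau>)"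
        proof -
          have "(\<Union>\<tau>\<in>T. Lo \<tau>) \<subseteq> P" using DP unfolding Lo_def by blast
          then have fU: "finite (\<Union>\<tau>\<in>T. Lo \<tau>)" using fP by (rule finite_subset)
          show ?thesis by (rule card_mono[OF fU lsub])
        qed
        also have "\<dots> \<le> (\<Sum>\<tau>\<in>T. card (Lo \<tau>))" by (rule card_UN_le[OF fT])
        also have "\<dots> \<le> (\<Sum>\<tau>\<in>T. E')" unfolding Lo_def by (intro sum_mono SS4)
        also have "\<dots> = card T * E'" by simp
        also have "\<dots> \<le> 2*A*K*(Lg (card P)+1)^(2*(card (insert i J) - 1))" by (rule target[OF cT])
        finally show ?thesis using SF pw inb by (intro exI[of _ S]) auto
      qed
    qed
    then show "\<exists>F. goodF (insert i J) P K (2*A*K*(Lg (card P)+1)^(2*(card (insert i J) - 1))) F" by blast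
  qed
qed

lemma claim_all:
  fixes J :: "'n::finite set"
  shows "finite J \<Longrightarrow> i0 \<notin> J \<Longrightarrow> Claim (insert i0 J)"
proof (induction J rule: finite_induct)
  case empty then show ?case using claim_base by simp
next
  case (insert x F)
  then have "Claim (insert i0 F)" by simp
  moreover have "x \<notin> insert i0 F" using insert by blast
  ultimately have "Claim (insert x (insert i0 F))" using insert claim_step[of "insert i0 F" x] by auto
  then show ?case by (simp add: insert_commute)
qed


definition bbox :: "(real^'n) set \<Rightarrow> (real^'n) set" where
  "bbox Q = {x. \<forall>j. \<exists>a\<in>Q. \<exists>b\<in>Q. a$j \<le> x$j \<and> x$j \<le> b$j}"

lemma bbox_axis: "axis_box (bbox Q)"
  unfolding axis_box_def
proof (intro exI[of _ "\<lambda>j. {v. \<exists>a\<in>Q. \<exists>b\<in>Q. a$j \<le> v \<and> v \<le> b$j}"] conjI allI)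
  fix j
  show "is_interval {v. \<exists>a\<in>Q. \<exists>b\<in>Q. a$j \<le> v \<and> v \<le> b$j}"
    unfolding is_interval_1
  proof (intro ballI allI impI)
    fix u w v assume u: "u \<in> {v. \<exists>a\<in>Q. \<exists>b\<in>Q. a$j \<le> v \<and> v \<le> b$j}"
      and w: "w \<in> {v. \<exists>a\<in>Q. \<exists>b\<in>Q. a$j \<le> v \<and> v \<le> b$j}" and v: "u \<le> v \<and> v \<le> w"
    from u obtain a where "a \<in> Q" "a$j \<le> u" by auto
    moreover from w obtain b where "b \<in> Q" "w \<le> b$j" by auto
    ultimately show "v \<in> {v. \<exists>a\<in>Q. \<exists>b\<in>Q. a$j \<le> v \<and> v \<le> b$j}" using v by force
  qed
qed (simp add: bbox_def)

lemma bbox_self: "x \<in> Q \<Longrightarrow> x \<in> bbox Q"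
  unfolding bbox_def by blast

lemma bbox_in:
  assumes "\<forall>j. is_interval (I j)" "\<forall>x\<in>Q. \<forall>j. x$j \<in> I j"
  shows "bbox Q \<subseteq> {x. \<forall>j. x$j \<in> I j}"
proof
  fix y assume "y \<in> bbox Q"
  show "y \<in> {x. \<forall>j. x$j \<in> I j}"
  proof (intro CollectI allI)
    fix j
    obtain a b where "a \<in> Q" "b \<in> Q" "a$j \<le> y$j" "y$j \<le> b$j" using \<open>y \<in> bbox Q\<close> unfolding bbox_def by blast
    then show "y$j \<in> I j" using assms unfolding is_interval_1 by blast
  qed
qed

lemma bbox_disj:
  assumes "sepr J Q1 Q2"
  shows "disjnt (bbox Q1) (bbox Q2)"
  unfolding disjnt_def
proof (rule ccontr)
  assume "bbox Q1 \<inter> bbox Q2 \<noteq> {}"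
  then obtain y where y1: "y \<in> bbox Q1" and y2: "y \<in> bbox Q2" by auto
  obtain i where "(\<forall>x\<in>Q1. \<forall>z\<in>Q2. x$i < z$i) \<or> (\<forall>x\<in>Q1. \<forall>z\<in>Q2. z$i < x$i)"
    using assms unfolding sepr_def by blast
  moreover obtain a1 b1 where "a1 \<in> Q1" "b1 \<in> Q1" "a1$i \<le> y$i" "y$i \<le> b1$i" using y1 unfolding bbox_def by blast
  moreover obtain a2 b2 where "a2 \<in> Q2" "b2 \<in> Q2" "a2$i \<le> y$i" "y$i \<le> b2$i" using y2 unfolding bbox_def by blast
  ultimately show False by fastforce
qed

theorem lemma15:
  shows "\<exists>C :: real. \<forall>P :: (real ^ 'n) set. finite P \<and> card P \<ge> 2 \<longrightarrow>
     (\<exists>\<B> :: (real ^ 'n) set set. finite \<B> \<and> real (card \<B>) \<le> real (card P) / 8 \<and>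
        (\<forall>B\<in>\<B>. axis_box B) \<and>
        (\<forall>R. axis_box R \<longrightarrow>
           (\<exists>\<S> R'. \<S> \<subseteq> \<B> \<and> R' \<subseteq> R \<and>
              R = \<Union>\<S> \<union> R' \<and>
              pairwise disjnt \<S> \<and> (\<forall>S\<in>\<S>. disjnt S R') \<and>
              real (card (P \<inter> R')) \<le> C * (ln (real (card P))) ^ (2 * CARD('n) - 2))))"
proof -
  obtain i0 :: 'n where True by simp
  have U: "insert i0 (UNIV - {i0}) = (UNIV :: 'n set)" by auto
  have "Claim (insert i0 (UNIV - {i0}) :: 'n set)" by (rule claim_all) auto
  then have "Claim (UNIV :: 'n set)" unfolding U .
  then obtain A where A: "\<forall>(P::(real^'n) set) K. finite P \<longrightarrow> 1 \<le> K \<longrightarrow>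
      (\<exists>F. goodF UNIV P K (A*K*(Lg (card P)+1)^(2*(card (UNIV::'n set) - 1))) F)"
    unfolding Claim_def by blast
  define d where "d = CARD('n)"
  have dd: "2*(card (UNIV::'n set) - 1) = 2*d - 2" unfolding d_def by simp
  show ?thesis
  proof (intro exI[of _ "real (8*A) * 6^(2*d-2)"] allI impI)
    fix P :: "(real^'n) set" assume "finite P \<and> 2 \<le> card P"
    then have fP: "finite P" and n2: "2 \<le> card P" by auto
    define n where "n = card P"
    obtain F where gF: "goodF UNIV P 8 (A*8*(Lg n+1)^(2*d-2)) F"
      using A[rule_format, OF fP, of 8] dd unfolding n_def by auto
    define BB where "BB = bbox ` F"
    have bound: "real (A*8*(Lg n+1)^(2*d-2)) \<le> real (8*A) * 6^(2*d-2) * ln (real n) ^ (2*d-2)"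
    proof -
      have "real (Lg n) + 1 \<le> 6 * ln (real n)" using Lg_ln n2 unfolding n_def by simp
      then have "(real (Lg n) + 1)^(2*d-2) \<le> (6 * ln (real n))^(2*d-2)"
        by (intro power_mono) auto
      then have "real (8*A) * (real (Lg n) + 1)^(2*d-2) \<le> real (8*A) * (6 * ln (real n))^(2*d-2)"
        by (intro mult_left_mono) auto
      then show ?thesis by (simp add: power_mult_distrib algebra_simps)
    qed
    show "\<exists>\<B> :: (real ^ 'n) set set. finite \<B> \<and> real (card \<B>) \<le> real (card P) / 8 \<and>
        (\<forall>B\<in>\<B>. axis_box B) \<and>
        (\<forall>R. axis_box R \<longrightarrow>
           (\<exists>\<S> R'. \<S> \<subseteq> \<B> \<and> R' \<subseteq> R \<and>
              R = \<Union>\<S> \<union> R' \<and>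
              pairwise disjnt \<S> \<and> (\<forall>S\<in>\<S>. disjnt S R') \<and>
              real (card (P \<inter> R')) \<le> real (8*A) * 6^(2*d-2) * (ln (real (card P))) ^ (2 * CARD('n) - 2)))"
    proof (rule exI[of _ BB], intro conjI allI impI ballI)
      have fF: "finite F" using goodF_basic[OF gF] by auto
      then show "finite BB" unfolding BB_def by simp
      have "card BB * 8 \<le> card P" using card_image_le[OF fF, of bbox] goodF_basic(3)[OF gF]
        unfolding BB_def by linarith
      then show "real (card BB) \<le> real (card P) / 8" by simp
    next
      fix B assume "B \<in> BB" then show "axis_box B" unfolding BB_def using bbox_axis by auto
    next
      fix R :: "(real^'n) set" assume "axis_box R"
      then obtain I where Iint: "\<forall>j. is_interval (I j)" and R: "R = {x. \<forall>j. x$j \<in> I j}"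
        unfolding axis_box_def by blast
      obtain S where SF: "S \<subseteq> F" and pw: "pairwise (sepr UNIV) S" and inb: "\<forall>Q\<in>S. \<forall>x\<in>Q. inbox UNIV I x"
        and cS: "card {x\<in>P. inbox UNIV I x \<and> x \<notin> \<Union>S} \<le> A*8*(Lg n+1)^(2*d-2)"
        by (rule goodF_query[OF gF Iint])
      define S' where "S' = bbox ` S"
      define R' where "R' = R - \<Union>S'"
      have S'R: "\<Union>S' \<subseteq> R"
      proof -
        have "bbox Q \<subseteq> R" if "Q \<in> S" for Q
          unfolding R using bbox_in[OF Iint] inb that unfolding inbox_def by blast
        then show ?thesis unfolding S'_def by blast
      qed
      have pwS': "pairwise disjnt S'"
      proof (rule pairwiseI)
        fix B1 B2 assume "B1 \<in> S'" "B2 \<in> S'" "B1 \<noteq> B2"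
        then obtain Q1 Q2 where "Q1 \<in> S" "Q2 \<in> S" "B1 = bbox Q1" "B2 = bbox Q2" "Q1 \<noteq> Q2"
          unfolding S'_def by auto
        then show "disjnt B1 B2" using pw bbox_disj unfolding pairwise_def by metis
      qed
      have "P \<inter> R' \<subseteq> {x\<in>P. inbox UNIV I x \<and> x \<notin> \<Union>S}"
      proof
        fix x assume "x \<in> P \<inter> R'"
        then have xP: "x \<in> P" and xR: "x \<in> R" and xS': "x \<notin> \<Union>S'" unfolding R'_def by auto
        have "x \<notin> \<Union>S" using xS' bbox_self unfolding S'_def by blast
        then show "x \<in> {x\<in>P. inbox UNIV I x \<and> x \<notin> \<Union>S}" using xP xR unfolding R inbox_def by auto
      qed
      then have "card (P \<inter> R') \<le> card {x\<in>P. inbox UNIV I x \<and> x \<notin> \<Union>S}" using fP by (intro card_mono) auto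
      then have "real (card (P \<inter> R')) \<le> real (A*8*(Lg n+1)^(2*d-2))" using cS by linarith
      also note bound
      finally have cb: "real (card (P \<inter> R')) \<le> real (8*A) * 6^(2*d-2) * ln (real (card P)) ^ (2 * CARD('n) - 2)"
        unfolding n_def d_def .
      show "\<exists>\<S> R'. \<S> \<subseteq> BB \<and> R' \<subseteq> R \<and> R = \<Union>\<S> \<union> R' \<and> pairwise disjnt \<S> \<and> (\<forall>S\<in>\<S>. disjnt S R') \<and>
              real (card (P \<inter> R')) \<le> real (8*A) * 6^(2*d-2) * (ln (real (card P))) ^ (2 * CARD('n) - 2)"
      proof (intro exI[of _ S'] exI[of _ R'] conjI)
        show "S' \<subseteq> BB" unfolding S'_def BB_def using SF by auto
        show "R' \<subseteq> R" unfolding R'_def by auto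
        show "R = \<Union>S' \<union> R'" unfolding R'_def using S'R by auto
        show "pairwise disjnt S'" by (rule pwS')
        show "\<forall>S\<in>S'. disjnt S R'" unfolding R'_def disjnt_def by auto
        show "real (card (P \<inter> R')) \<le> real (8*A) * 6^(2*d-2) * (ln (real (card P))) ^ (2 * CARD('n) - 2)"
          by (rule cb)
      qed
    qed
  qed
qed

end
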